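(* Let $d\ge 1$ and $k\ge 2$ be integers. The Hamming graph $H(d,k)$ admits a closed neighborhood balanced $k$-coloring if and only if $d\equiv 1 \pmod{k}$.
   Context: The Hamming graph $H(d,k)$ has vertex set $S^d$ where $S=\{1,2,\dots,k\}$, two $d$-tuples being adjacent iff they differ in exactly one coordinate. For a vertex $v$ of a graph $G$, $N[v]=\{v\}\cup\{u : uv\in E(G)\}$. A closed neighborhood balanced $k$-coloring of $G$ is a map $c: V(G)\to\{1,\dots,k\}$ such that for every vertex $v$ the numbers $|\{u\in N[v] : c(u)=i\}|$, $i=1,\dots,k$, are all equal. *)

theory Defs
  imports Main
begin

text \<open>Hamming graph H(d,k): vertices are d-tuples over {1..k}, represented as
  functions nat => nat with values in {1..k} on coordinates 0..d-1 and value 0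
  (a dummy) outside.\<close>

definition hamming_vertices :: "nat \<Rightarrow> nat \<Rightarrow> (nat \<Rightarrow> nat) set" where
  "hamming_vertices d k = {v. (\<forall>i<d. v i \<in> {1..k}) \<and> (\<forall>i\<ge>d. v i = 0)}"

definition hamming_adj :: "nat \<Rightarrow> (nat \<Rightarrow> nat) \<Rightarrow> (nat \<Rightarrow> nat) \<Rightarrow> bool" where
  "hamming_adj d u v \<longleftrightarrow> card {i. i < d \<and> u i \<noteq> v i} = 1"

definition hamming_closed_nbhd :: "nat \<Rightarrow> nat \<Rightarrow> (nat \<Rightarrow> nat) \<Rightarrow> (nat \<Rightarrow> nat) set" where
  "hamming_closed_nbhd d k v = {v} \<union> {u \<in> hamming_vertices d k. hamming_adj d u v}"

definition cnb_coloring :: "'a set \<Rightarrow> ('a \<Rightarrow> 'a set) \<Rightarrow> nat \<Rightarrow> ('a \<Rightarrow> nat) \<Rightarrow> bool" where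
  "cnb_coloring V N k c \<longleftrightarrow>
     (\<forall>v\<in>V. c v \<in> {1..k}) \<and>
     (\<forall>v\<in>V. \<forall>i\<in>{1..k}. \<forall>j\<in>{1..k}.
        card {u \<in> N v. c u = i} = card {u \<in> N v. c u = j})"

end

theory Submission
  imports Defs
begin

lemma nbrs_eq:
  assumes v: "v \<in> hamming_vertices d k"
  shows "{u \<in> hamming_vertices d k. hamming_adj d u v}
       = (\<Union>i\<in>{..<d}. (\<lambda>a. v(i:=a)) ` ({1..k} - {v i}))"
proof (intro equalityI subsetI)
  fix u assume u: "u \<in> {u \<in> hamming_vertices d k. hamming_adj d u v}"
  then have "card {j. j < d \<and> u j \<noteq> v j} = 1" by (simp add: hamming_adj_def)
  then obtain i where i: "{j. j < d \<and> u j \<noteq> v j} = {i}" by (auto simp: card_1_singleton_iff)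
  then have id: "i < d" "u i \<noteq> v i" by auto
  have "u = v(i := u i)"
  proof
    fix j show "u j = (v(i := u i)) j"
    proof (cases "j < d")
      case True then show ?thesis using i by (cases "j = i") auto
    next
      case False then show ?thesis using u v id by (auto simp: hamming_vertices_def)
    qed
  qed
  moreover have "u i \<in> {1..k}" using u id by (auto simp: hamming_vertices_def)
  ultimately show "u \<in> (\<Union>i\<in>{..<d}. (\<lambda>a. v(i:=a)) ` ({1..k} - {v i}))"
    using id by blast
next
  fix u assume "u \<in> (\<Union>i\<in>{..<d}. (\<lambda>a. v(i:=a)) ` ({1..k} - {v i}))"
  then obtain i a where ia: "i < d" "a \<in> {1..k}" "a \<noteq> v i" "u = v(i:=a)" by blast
  have "{j. j < d \<and> u j \<noteq> v j} = {i}" using ia by auto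
  then have "hamming_adj d u v" by (simp add: hamming_adj_def)
  moreover have "u \<in> hamming_vertices d k" using v ia by (auto simp: hamming_vertices_def)
  ultimately show "u \<in> {u \<in> hamming_vertices d k. hamming_adj d u v}" by blast
qed

lemma count_nbhd:
  assumes v: "v \<in> hamming_vertices d k"
  shows "card {u \<in> hamming_closed_nbhd d k v. P u}
       = (if P v then 1 else 0) + (\<Sum>i<d. card {a \<in> {1..k} - {v i}. P (v(i:=a))})"
proof -
  let ?Nb = "{u \<in> hamming_vertices d k. hamming_adj d u v}"
  have vn: "v \<notin> ?Nb" by (simp add: hamming_adj_def)
  have eq1: "{u \<in> hamming_closed_nbhd d k v. P u} = (if P v then {v} else {}) \<union> {u \<in> ?Nb. P u}"
    by (auto simp: hamming_closed_nbhd_def)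
  have eq2: "{u \<in> ?Nb. P u} = (\<Union>i\<in>{..<d}. (\<lambda>a. v(i:=a)) ` {a \<in> {1..k} - {v i}. P (v(i:=a))})"
    unfolding nbrs_eq[OF v] by blast
  have c2: "card {u \<in> ?Nb. P u} = (\<Sum>i<d. card {a \<in> {1..k} - {v i}. P (v(i:=a))})"
    unfolding eq2
  proof (subst card_UN_disjoint)
    show "finite {..<d}" by simp
    show "\<forall>i\<in>{..<d}. finite ((\<lambda>a. v(i:=a)) ` {a \<in> {1..k} - {v i}. P (v(i:=a))})" by simp
    show "\<forall>i\<in>{..<d}. \<forall>j\<in>{..<d}. i \<noteq> j \<longrightarrow>
      (\<lambda>a. v(i:=a)) ` {a \<in> {1..k} - {v i}. P (v(i:=a))} \<inter> (\<lambda>a. v(j:=a)) ` {a \<in> {1..k} - {v j}. P (v(j:=a))} = {}"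
    proof (intro ballI impI)
      fix i j :: nat assume "i \<noteq> j"
      show "(\<lambda>a. v(i:=a)) ` {a \<in> {1..k} - {v i}. P (v(i:=a))} \<inter> (\<lambda>a. v(j:=a)) ` {a \<in> {1..k} - {v j}. P (v(j:=a))} = {}"
      proof (rule ccontr)
        assume "\<not> ?thesis"
        then obtain a b where "a \<noteq> v i" "v(i:=a) = v(j:=b)" by blast
        then have "(v(i:=a)) i = (v(j:=b)) i" by simp
        then show False using \<open>i \<noteq> j\<close> \<open>a \<noteq> v i\<close> by simp
      qed
    qed
    show "(\<Sum>i\<in>{..<d}. card ((\<lambda>a. v(i:=a)) ` {a \<in> {1..k} - {v i}. P (v(i:=a))})) =
          (\<Sum>i<d. card {a \<in> {1..k} - {v i}. P (v(i:=a))})"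
    proof (rule sum.cong)
      fix i assume "i \<in> {..<d}"
      have "inj_on (\<lambda>a. v(i:=a)) {a \<in> {1..k} - {v i}. P (v(i:=a))}"
        by (rule inj_onI) (metis fun_upd_same)
      then show "card ((\<lambda>a. v(i:=a)) ` {a \<in> {1..k} - {v i}. P (v(i:=a))}) = card {a \<in> {1..k} - {v i}. P (v(i:=a))}"
        by (rule card_image)
    qed simp
  qed
  have fin: "finite {u \<in> ?Nb. P u}" unfolding eq2 by simp
  show ?thesis unfolding eq1 c2[symmetric] using vn fin by (auto simp: card_insert_if)
qed

lemma one_residue:
  assumes "k \<ge> 1" "r < k"
  shows "card {a \<in> {1..k::nat}. (T + a) mod k = r} = 1"
proof -
  let ?f = "\<lambda>a. (T + a) mod k"
  have inj: "inj_on ?f {1..k}"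
  proof (rule inj_onI)
    fix a b assume ab: "a \<in> {1..k}" "b \<in> {1..k}" "?f a = ?f b"
    then have "a mod k = b mod k" by (simp add: nat_mod_eq_iff)
    then show "a = b" using ab by (cases "a = k"; cases "b = k") auto
  qed
  have "?f ` {1..k} \<subseteq> {..<k}" using assms by auto
  moreover have "card (?f ` {1..k}) = card {..<k}" using card_image[OF inj] by simp
  ultimately have "?f ` {1..k} = {..<k}" by (simp add: card_subset_eq)
  then have "r \<in> ?f ` {1..k}" using assms by simp
  then obtain a0 where a0: "a0 \<in> {1..k}" "?f a0 = r" by blast
  have "{a \<in> {1..k}. ?f a = r} = {a0}"
  proof (intro equalityI subsetI)
    fix a assume "a \<in> {a \<in> {1..k}. ?f a = r}"
    then have "a \<in> {1..k}" "?f a = ?f a0" using a0 by auto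
    then have "a = a0" using inj_onD[OF inj _ _ a0(1)] by blast
    then show "a \<in> {a0}" by simp
  qed (use a0 in simp)
  then show ?thesis by simp
qed

theorem theorem2p5:
  fixes d k :: nat
  assumes "d \<ge> 1" and "k \<ge> 2"
  shows "(\<exists>c. cnb_coloring (hamming_vertices d k) (hamming_closed_nbhd d k) k c)
         \<longleftrightarrow> d mod k = 1 mod k"
  (is "?L \<longleftrightarrow> ?R")
proof
  assume ?L
  then obtain c where c: "cnb_coloring (hamming_vertices d k) (hamming_closed_nbhd d k) k c" by blast
  define v0 where "v0 = (\<lambda>i::nat. if i < d then 1 else (0::nat))"
  have v0: "v0 \<in> hamming_vertices d k" using assms by (auto simp: v0_def hamming_vertices_def)
  define N where "N = hamming_closed_nbhd d k v0"
  have NV: "N \<subseteq> hamming_vertices d k" using v0 by (auto simp: N_def hamming_closed_nbhd_def)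
  have cN: "\<forall>u\<in>N. c u \<in> {1..k}" using c NV unfolding cnb_coloring_def by blast
  have one: "(1::nat) \<in> {1..k}" using assms by simp
  have eqc: "\<forall>j\<in>{1..k}. card {u \<in> N. c u = j} = card {u \<in> N. c u = 1}"
    using c v0 one unfolding cnb_coloring_def N_def by blast
  have cardN: "card N = 1 + d * (k - 1)"
  proof -
    have "card {u \<in> N. True} = 1 + (\<Sum>i<d. card {a \<in> {1..k} - {v0 i}. True})"
      unfolding N_def by (subst count_nbhd[OF v0]) simp
    also have "\<dots> = 1 + d * (k - 1)"
    proof -
      have "card {a \<in> {1..k} - {v0 i}. True} = k - 1" if "i < d" for i
      proof -
        have "{a \<in> {1..k} - {v0 i}. True} = {1..k} - {1}" using that by (auto simp: v0_def)
        then show ?thesis using assms by simp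
      qed
      then show ?thesis by simp
    qed
    finally show ?thesis by simp
  qed
  have finN: "finite N" unfolding N_def hamming_closed_nbhd_def nbrs_eq[OF v0] by simp
  have "N = (\<Union>j\<in>{1..k}. {u \<in> N. c u = j})" using cN by blast
  then have "card N = card (\<Union>j\<in>{1..k}. {u \<in> N. c u = j})" by (rule arg_cong)
  also have "\<dots> = (\<Sum>j\<in>{1..k}. card {u \<in> N. c u = j})"
    by (rule card_UN_disjoint) (use finN in auto)
  also have "\<dots> = (\<Sum>j\<in>{1..k}. card {u \<in> N. c u = 1})"
    by (intro sum.cong refl) (use eqc in blast)
  also have "\<dots> = k * card {u \<in> N. c u = 1}" by simp
  finally have "k * card {u \<in> N. c u = 1} = 1 + d * (k - 1)" using cardN by simp
  then have "d + k * card {u \<in> N. c u = 1} = 1 + d * k" using assms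
    by (cases k) (auto simp: algebra_simps)
  then show ?R by (metis mod_mult_self1 mod_mult_self2)
next
  assume R: ?R
  define m where "m = d div k"
  have dm: "d = m * k + 1"
  proof -
    have "d mod k = 1" using R assms by simp
    then show ?thesis using div_mult_mod_eq[of d k] unfolding m_def by linarith
  qed
  define e where "e = d - m"
  have ed: "e \<le> d" by (simp add: e_def)
  define c where "c = (\<lambda>u::nat\<Rightarrow>nat. (\<Sum>l<e. u l) mod k + 1)"
  have k1: "k \<ge> 1" using assms by simp
  show ?L
  proof (intro exI)
    show "cnb_coloring (hamming_vertices d k) (hamming_closed_nbhd d k) k c"
      unfolding cnb_coloring_def
    proof (intro conjI ballI)
      fix v assume "v \<in> hamming_vertices d k"
      show "c v \<in> {1..k}" using k1 by (simp add: c_def Suc_le_eq)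
    next
      fix v i j assume v: "v \<in> hamming_vertices d k" and i: "i \<in> {1..k}" and j: "j \<in> {1..k}"
      have key: "card {u \<in> hamming_closed_nbhd d k v. c u = j} = 1 + m * (k - 1)" if j: "j \<in> {1..k}" for j
      proof -
        have t1: "card {a \<in> {1..k} - {v l}. c (v(l:=a)) = j} = (if c v = j then 0 else 1)"
          if l: "l < e" for l
        proof -
          define T where "T = (\<Sum>l'\<in>{..<e} - {l}. v l')"
          have ca: "c (v(l:=a)) = (T + a) mod k + 1" for a
          proof -
            have "(\<Sum>l'<e. (v(l:=a)) l') = (v(l:=a)) l + (\<Sum>l'\<in>{..<e} - {l}. (v(l:=a)) l')"
              using l by (simp add: sum.remove)
            also have "\<dots> = a + T" unfolding T_def by (auto intro: sum.cong)
            finally show ?thesis by (simp add: c_def add.commute)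
          qed
          have cv: "c v = (T + v l) mod k + 1" using ca[of "v l"] by simp
          have vl: "v l \<in> {1..k}" using v l ed by (auto simp: hamming_vertices_def)
          have "{a \<in> {1..k} - {v l}. c (v(l:=a)) = j} = {a \<in> {1..k}. (T + a) mod k = j - 1} - {v l}"
            using j by (auto simp: ca)
          moreover have "card {a \<in> {1..k}. (T + a) mod k = j - 1} = 1"
            using one_residue[OF k1, of "j - 1" T] j by fastforce
          ultimately show ?thesis using vl j cv by (auto simp: card_Diff_singleton_if)
        qed
        have t2: "card {a \<in> {1..k} - {v l}. c (v(l:=a)) = j} = (if c v = j then k - 1 else 0)"
          if l: "e \<le> l" "l < d" for l
        proof -
          have ca: "c (v(l:=a)) = c v" for a unfolding c_def using l by (auto intro!: arg_cong[where f="\<lambda>x. x mod k + 1"] sum.cong)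
          have vl: "v l \<in> {1..k}" using v l by (auto simp: hamming_vertices_def)
          have "{a \<in> {1..k} - {v l}. c (v(l:=a)) = j} = (if c v = j then {1..k} - {v l} else {})"
            using ca by auto
          then show ?thesis using vl by (simp add: card_Diff_singleton)
        qed
        have h1: "card {u \<in> hamming_closed_nbhd d k v. c u = j}
              = (if c v = j then 1 else 0) + (\<Sum>l<d. card {a \<in> {1..k} - {v l}. c (v(l:=a)) = j})"
          by (rule count_nbhd[OF v])
        have h2: "(\<Sum>l<d. card {a \<in> {1..k} - {v l}. c (v(l:=a)) = j})
             = (\<Sum>l<e. card {a \<in> {1..k} - {v l}. c (v(l:=a)) = j}) + (\<Sum>l\<in>{e..<d}. card {a \<in> {1..k} - {v l}. c (v(l:=a)) = j})"
          using sum.atLeastLessThan_concat[of 0 e d "\<lambda>l. card {a \<in> {1..k} - {v l}. c (v(l:=a)) = j}"] ed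
          by (simp add: lessThan_atLeast0)
        have h3: "(\<Sum>l<e. card {a \<in> {1..k} - {v l}. c (v(l:=a)) = j}) = (\<Sum>l<e. (if c v = j then 0 else 1))"
          by (rule sum.cong[OF refl]) (rule t1, simp)
        have h4: "(\<Sum>l\<in>{e..<d}. card {a \<in> {1..k} - {v l}. c (v(l:=a)) = j}) = (\<Sum>l\<in>{e..<d}. (if c v = j then k - 1 else 0))"
          by (rule sum.cong[OF refl]) (rule t2; simp)
        have h5: "(\<Sum>l<e. (if c v = j then 0 else 1)) = (if c v = j then 0 else e)" by simp
        have h6: "(\<Sum>l\<in>{e..<d}. (if c v = j then k - 1 else (0::nat))) = (if c v = j then m * (k - 1) else 0)"
        proof -
          have "m \<le> d" using dm k1 by (metis le_add1 le_trans mult_le_mono2 mult.commute mult_1_right)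
          then show ?thesis by (simp add: e_def)
        qed
        have "card {u \<in> hamming_closed_nbhd d k v. c u = j} = (if c v = j then 1 + m * (k - 1) else e)"
          unfolding h1 h2 h3 h4 h5 h6 by simp
        moreover have "e = 1 + m * (k - 1)"
        proof -
          have "m * (k - 1) + m = m * k" using k1 by (cases k) auto
          then show ?thesis unfolding e_def using dm by linarith
        qed
        ultimately show ?thesis by simp
      qed
      show "card {u \<in> hamming_closed_nbhd d k v. c u = i} = card {u \<in> hamming_closed_nbhd d k v. c u = j}"
        using key[OF i] key[OF j] by simp
    qed
  qed
qed

end
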